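(* Assume the setting in the context, and in addition $\phi_\alpha=\phi_\beta$. Suppose $A:=\phi_\alpha-\gamma\phi'_\alpha$ and $B:=\phi_\beta-\gamma\phi'_\beta$ have opposite signs, so that both $\theta_{\pi_1}$ and $\theta_{\pi_2}$ exist and are distinct, and let $\Omega=\{\lambda\theta_{\pi_1}+(1-\lambda)\theta_{\pi_2}:\lambda\in(0,1)\}$ be the open segment between them. Write $d=\theta_{\pi_1}-\theta_{\pi_2}$ and, for nonzero $x,y\in\mathbb{R}^2$, $\cos(x,y)=\langle x,y\rangle/(\|x\|\|y\|)$. (1) If $A>0$ and $B<0$, then $\cos\big(d,F^{\pi_2}_{\mathrm{semi}}(\theta)\big)=1$ for every $\theta\in\Omega$ with $\theta_2\ge\theta_1$, and $\cos\big(d,F^{\pi_1}_{\mathrm{semi}}(\theta)\big)=1$ for every $\theta\in\Omega$ with $\theta_2\le\theta_1$. (2) If $A<0$ and $B>0$, then $\cos\big(d,F^{\pi_2}_{\mathrm{semi}}(\theta)\big)=-1$ for every $\theta\in\Omega$ with $\theta_2\ge\theta_1$, and $\cos\big(d,F^{\pi_1}_{\mathrm{semi}}(\theta)\big)=-1$ for every $\theta\in\Omega$ with $\theta_2\le\theta_1$. (In particular the relevant semi-gradient fields are nonzero on these sets, and along the segment they point toward $\theta_{\pi_1}$ in case (1) and toward $\theta_{\pi_2}$ in case (2).)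
   Context: Let $\gamma\in(0,1)$, $C<0$, $\phi_\alpha,\phi_\beta>0$, $\phi'_\alpha,\phi'_\beta\ge0$ with $\phi_\alpha-\gamma\phi'_\alpha\ne0$ and $\phi_\beta-\gamma\phi'_\beta\ne0$. These are the scalar embeddings $\phi(s_\alpha),\phi(s_\beta),\phi(s'_\alpha),\phi(s'_\beta)$ of the states in a two-sample dataset $\{(s_\alpha,a_1,s'_\alpha,C),(s_\beta,a_2,s'_\beta,C)\}$ from an MDP with actions $\{a_1,a_2\}$ and discount $\gamma$, with linear parameterization $Q(s,a)=\phi(s)\theta(a)$, $\theta=(\theta_1,\theta_2)=(\theta(a_1),\theta(a_2))\in\mathbb{R}^2$. Policy $\pi_1$ corresponds to the region $\theta_1\ge\theta_2$ and $\pi_2$ to $\theta_1\le\theta_2$. Negative semi-gradients: $F^{\pi_1}_{\mathrm{semi}}(\theta)=\big(-\phi_\alpha(\phi_\alpha\theta_1-C-\gamma\phi'_\alpha\theta_1),\ -\phi_\beta(\phi_\beta\theta_2-C-\gamma\phi'_\beta\theta_1)\big)$, $F^{\pi_2}_{\mathrm{semi}}(\theta)=\big(-\phi_\alpha(\phi_\alpha\theta_1-C-\gamma\phi'_\alpha\theta_2),\ -\phi_\beta(\phi_\beta\theta_2-C-\gamma\phi'_\beta\theta_2)\big)$. Solutions of the Bellman equations: with $A=\phi_\alpha-\gamma\phi'_\alpha$, $B=\phi_\beta-\gamma\phi'_\beta$, $\theta_{\pi_1}=\Big(\frac{C}{A},\ \frac{C}{\phi_\beta}+\frac{C\gamma\phi'_\beta}{\phi_\beta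 A}\Big)$ (the zero of $F^{\pi_1}_{\mathrm{semi}}$, lying in $\{\theta_1\ge\theta_2\}$ iff $B/A\le1$) and $\theta_{\pi_2}=\Big(\frac{C}{\phi_\alpha}+\frac{C\gamma\phi'_\alpha}{\phi_\alpha B},\ \frac{C}{B}\Big)$ (the zero of $F^{\pi_2}_{\mathrm{semi}}$, lying in $\{\theta_1\le\theta_2\}$ iff $A/B\le1$). *)

theory Defs
  imports "HOL-Analysis.Analysis"
begin

text \<open>Parameters theta = (theta1, theta2) :: real \<times> real, pa = phi_alpha, pb = phi_beta,
  pa' = phi'_alpha, pb' = phi'_beta, g = gamma, C = reward.\<close>

definition F_semi_pi1 :: "real \<Rightarrow> real \<Rightarrow> real \<Rightarrow> real \<Rightarrow> real \<Rightarrow> real \<Rightarrow> real \<times> real \<Rightarrow> real \<times> real" where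
  "F_semi_pi1 g C pa pb pa' pb' \<theta> =
     (- pa * (pa * fst \<theta> - C - g * pa' * fst \<theta>),
      - pb * (pb * snd \<theta> - C - g * pb' * fst \<theta>))"

definition F_semi_pi2 :: "real \<Rightarrow> real \<Rightarrow> real \<Rightarrow> real \<Rightarrow> real \<Rightarrow> real \<Rightarrow> real \<times> real \<Rightarrow> real \<times> real" where
  "F_semi_pi2 g C pa pb pa' pb' \<theta> =
     (- pa * (pa * fst \<theta> - C - g * pa' * snd \<theta>),
      - pb * (pb * snd \<theta> - C - g * pb' * snd \<theta>))"

definition theta_pi1 :: "real \<Rightarrow> real \<Rightarrow> real \<Rightarrow> real \<Rightarrow> real \<Rightarrow> real \<Rightarrow> real \<times> real" where
  "theta_pi1 g C pa pb pa' pb' =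
     (let A = pa - g * pa' in (C / A, C / pb + C * g * pb' / (pb * A)))"

definition theta_pi2 :: "real \<Rightarrow> real \<Rightarrow> real \<Rightarrow> real \<Rightarrow> real \<Rightarrow> real \<Rightarrow> real \<times> real" where
  "theta_pi2 g C pa pb pa' pb' =
     (let B = pb - g * pb' in (C / pa + C * g * pa' / (pa * B), C / B))"

definition cosine :: "real \<times> real \<Rightarrow> real \<times> real \<Rightarrow> real" where
  "cosine x y = inner x y / (norm x * norm y)"

end

theory Submission
  imports Defs
begin

lemma c1: fixes A B p C :: real assumes "A \<noteq> 0" "B \<noteq> 0" "p \<noteq> 0"
  shows "C / A - (C / p + C * (p - A) / (p * B)) = C*(p-A)*(B-A)/(p*A*B)"
  using assms by (simp add: field_simps)
lemma c2: fixes A B p C :: real assumes "A \<noteq> 0" "B \<noteq> 0" "p \<noteq> 0"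
  shows "C / p + C * (p - B) / (p * A) - C / B = C*(p-B)*(B-A)/(p*A*B)"
  using assms by (simp add: field_simps)

lemma dform:
  fixes g C p a b :: real
  assumes "p > 0" "p - g*a \<noteq> 0" "p - g*b \<noteq> 0"
  defines "k \<equiv> C*(a-b)*g/(p*(p-g*a)*(p-g*b))"
  shows "theta_pi1 g C p p a b - theta_pi2 g C p p a b = (k * (g*a), k * (g*b))"
proof -
  have e1: "C * g * a = C * (p - (p - g*a))" "C * g * b = C * (p - (p - g*b))" by simp_all
  have "C / (p - g * a) - (C / p + C * g * a / (p * (p - g * b))) = C*(p-(p-g*a))*((p-g*b)-(p-g*a))/(p*(p-g*a)*(p-g*b))"
    unfolding e1 by (rule c1) (use assms in auto)
  also have "\<dots> = k * (g*a)" unfolding k_def by (simp add: algebra_simps times_divide_eq_left[symmetric] del: times_divide_eq_left)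
  finally have 1: "C / (p - g * a) - (C / p + C * g * a / (p * (p - g * b))) = k * (g*a)" .
  have "C / p + C * g * b / (p * (p - g * a)) - C / (p - g * b) = C*(p-(p-g*b))*((p-g*b)-(p-g*a))/(p*(p-g*a)*(p-g*b))"
    unfolding e1 by (rule c2) (use assms in auto)
  also have "\<dots> = k * (g*b)" unfolding k_def by (simp add: algebra_simps times_divide_eq_left[symmetric] del: times_divide_eq_left)
  finally have 2: "C / p + C * g * b / (p * (p - g * a)) - C / (p - g * b) = k * (g*b)" .
  show ?thesis unfolding theta_pi1_def theta_pi2_def Let_def using 1 2 by simp
qed

lemma Fform:
  fixes g C p a b l :: real
  assumes "p > 0" "p - g*a \<noteq> 0" "p - g*b \<noteq> 0"
  defines "k \<equiv> C*(a-b)*g/(p*(p-g*a)*(p-g*b))"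
  defines "t1 \<equiv> theta_pi1 g C p p a b" and "t2 \<equiv> theta_pi2 g C p p a b"
  shows "F_semi_pi2 g C p p a b (l *\<^sub>R t1 + (1 - l) *\<^sub>R t2) = (l * (- p * (p - g*b))) *\<^sub>R (t1 - t2)"
    and "F_semi_pi1 g C p p a b (l *\<^sub>R t1 + (1 - l) *\<^sub>R t2) = ((1 - l) * (p * (p - g*a))) *\<^sub>R (t1 - t2)"
proof -
  have d: "t1 - t2 = (k * (g*a), k * (g*b))" unfolding t1_def t2_def k_def by (rule dform) (use assms in auto)
  obtain x1 y1 where t1: "t1 = (x1, y1)" by (cases t1)
  obtain x2 y2 where t2: "t2 = (x2, y2)" by (cases t2)
  have x1: "x1 = C/(p - g*a)" and y1: "y1 = C / p + C * g * b / (p * (p - g*a))"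
    using t1 unfolding t1_def theta_pi1_def Let_def by auto
  have x2: "x2 = C / p + C * g * a / (p * (p - g*b))" and y2: "y2 = C/(p-g*b)"
    using t2 unfolding t2_def theta_pi2_def Let_def by auto
  have e1: "(p - g*a) * x1 - C = 0" using x1 assms by simp
  have py1: "p*y1 = C + C*g*b/(p-g*a)" using y1 assms by (simp add: distrib_left)
  have e2: "p * y1 - C - g*b*x1 = 0" using x1 py1 by simp
  have px2: "p*x2 = C + C*g*a/(p-g*b)" using x2 assms by (simp add: distrib_left)
  have e3: "p * x2 - C - g*a*y2 = 0" using y2 px2 by simp
  have e4: "(p - g*b) * y2 - C = 0" using y2 assms by simp
  have dx: "x1 - x2 = k*(g*a)" and dy: "y1 - y2 = k*(g*b)" using d t1 t2 by auto
  have th: "l *\<^sub>R t1 + (1 - l) *\<^sub>R t2 = (x2 + l*(k*(g*a)), y2 + l*(k*(g*b)))"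
    using t1 t2 dx dy by (simp add: algebra_simps)
  have th': "l *\<^sub>R t1 + (1 - l) *\<^sub>R t2 = (x1 - (1-l)*(k*(g*a)), y1 - (1-l)*(k*(g*b)))"
    using t1 t2 dx dy by (simp add: algebra_simps)
  have f21: "- p * (p * (x2 + l*(k*(g*a))) - C - g * a * (y2 + l*(k*(g*b)))) = l * (- p * (p - g*b)) * (k*(g*a))"
  proof -
    have "p * (x2 + l*(k*(g*a))) - C - g * a * (y2 + l*(k*(g*b))) = (p * x2 - C - g*a*y2) + l*(k*(g*a))*(p - g*b)"
      by (simp add: algebra_simps)
    then show ?thesis using e3 by (simp add: algebra_simps)
  qed
  have f22: "- p * (p * (y2 + l*(k*(g*b))) - C - g * b * (y2 + l*(k*(g*b)))) = l * (- p * (p - g*b)) * (k*(g*b))"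
  proof -
    have "p * (y2 + l*(k*(g*b))) - C - g * b * (y2 + l*(k*(g*b))) = ((p - g*b) * y2 - C) + l*(k*(g*b))*(p - g*b)"
      by (simp add: algebra_simps)
    then show ?thesis using e4 by (simp add: algebra_simps)
  qed
  have f11: "- p * (p * (x1 - (1-l)*(k*(g*a))) - C - g * a * (x1 - (1-l)*(k*(g*a)))) = (1-l) * (p * (p - g*a)) * (k*(g*a))"
  proof -
    have "p * (x1 - (1-l)*(k*(g*a))) - C - g * a * (x1 - (1-l)*(k*(g*a))) = ((p - g*a) * x1 - C) - (1-l)*(k*(g*a))*(p - g*a)"
      by (simp add: algebra_simps)
    then show ?thesis using e1 by (simp add: algebra_simps)
  qed
  have f12: "- p * (p * (y1 - (1-l)*(k*(g*b))) - C - g * b * (x1 - (1-l)*(k*(g*a)))) = (1-l) * (p * (p - g*a)) * (k*(g*b))"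
  proof -
    have "p * (y1 - (1-l)*(k*(g*b))) - C - g * b * (x1 - (1-l)*(k*(g*a))) = (p * y1 - C - g*b*x1) - (1-l)*(k*(g*b))*(p - g*a)"
      by (simp add: algebra_simps)
    then show ?thesis using e2 by (simp add: algebra_simps)
  qed
  show "F_semi_pi2 g C p p a b (l *\<^sub>R t1 + (1 - l) *\<^sub>R t2) = (l * (- p * (p - g*b))) *\<^sub>R (t1 - t2)"
    unfolding th d F_semi_pi2_def using f21 f22 by simp
  show "F_semi_pi1 g C p p a b (l *\<^sub>R t1 + (1 - l) *\<^sub>R t2) = ((1 - l) * (p * (p - g*a))) *\<^sub>R (t1 - t2)"
    unfolding th' d F_semi_pi1_def using f11 f12 by simp
qed

lemma cos_scale:
  fixes d :: "real \<times> real"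
  assumes "d \<noteq> 0" "c \<noteq> 0"
  shows "cosine d (c *\<^sub>R d) = sgn c"
proof -
  have n: "norm d \<noteq> 0" using assms by simp
  have "cosine d (c *\<^sub>R d) = c * (norm d)^2 / (norm d * (\<bar>c\<bar> * norm d))"
    unfolding cosine_def by (simp add: power2_norm_eq_inner)
  also have "\<dots> = c / \<bar>c\<bar>" using n by (simp add: power2_eq_square)
  also have "\<dots> = sgn c" using assms(2) by (simp add: sgn_real_def)
  finally show ?thesis .
qed

lemma dnz:
  fixes g C p a b :: real
  assumes "p > 0" "p - g*a \<noteq> 0" "p - g*b \<noteq> 0" "g > 0" "C < 0" "a \<noteq> b" "a \<ge> 0" "b \<ge> 0"
  shows "theta_pi1 g C p p a b - theta_pi2 g C p p a b \<noteq> 0"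
proof -
  have k: "C*(a-b)*g/(p*(p-g*a)*(p-g*b)) \<noteq> 0" using assms by simp
  have D: "p*(p-g*a)*(p-g*b) \<noteq> 0" using assms by simp
  show ?thesis
  proof
    assume h: "theta_pi1 g C p p a b - theta_pi2 g C p p a b = 0"
    have "C * (a - b) * g * (g * a) / (p * (p - g * a) * (p - g * b)) = 0"
         "C * (a - b) * g * (g * b) / (p * (p - g * a) * (p - g * b)) = 0"
      using h dform[of p g a b C] assms by (auto simp: zero_prod_def)
    then have "a = 0" "b = 0" using D assms by auto
    then show False using assms by simp
  qed
qed
lemma cos_pos:
  fixes d F :: "real \<times> real"
  assumes "d \<noteq> 0" "c > 0" "F = c *\<^sub>R d"
  shows "d \<noteq> 0 \<and> F \<noteq> 0 \<and> cosine d F = 1"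
  using assms cos_scale[of d c] by simp

lemma cos_neg:
  fixes d F :: "real \<times> real"
  assumes "d \<noteq> 0" "c < 0" "F = c *\<^sub>R d"
  shows "d \<noteq> 0 \<and> F \<noteq> 0 \<and> cosine d F = -1"
  using assms cos_scale[of d c] by simp

theorem theorem1:
  fixes g C pa pb pa' pb' :: real
  assumes "0 < g" "g < 1" "C < 0"
    and "pa > 0" "pb > 0" "pa' \<ge> 0" "pb' \<ge> 0"
    and "pa - g * pa' \<noteq> 0" "pb - g * pb' \<noteq> 0"
    and "pa = pb"
    and "(pa - g * pa') * (pb - g * pb') < 0"
  defines "\<Omega> \<equiv> {l *\<^sub>R theta_pi1 g C pa pb pa' pb' + (1 - l) *\<^sub>R theta_pi2 g C pa pb pa' pb' | l. 0 < l \<and> l < 1}"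
    and "d \<equiv> theta_pi1 g C pa pb pa' pb' - theta_pi2 g C pa pb pa' pb'"
  shows
    "(pa - g * pa' > 0 \<and> pb - g * pb' < 0 \<longrightarrow>
       (\<forall>\<theta>\<in>\<Omega>. snd \<theta> \<ge> fst \<theta> \<longrightarrow>
          d \<noteq> 0 \<and> F_semi_pi2 g C pa pb pa' pb' \<theta> \<noteq> 0 \<and>
          cosine d (F_semi_pi2 g C pa pb pa' pb' \<theta>) = 1) \<and>
       (\<forall>\<theta>\<in>\<Omega>. snd \<theta> \<le> fst \<theta> \<longrightarrow>
          d \<noteq> 0 \<and> F_semi_pi1 g C pa pb pa' pb' \<theta> \<noteq> 0 \<and>
          cosine d (F_semi_pi1 g C pa pb pa' pb' \<theta>) = 1))
   \<and> (pa - g * pa' < 0 \<and> pb - g * pb' > 0 \<longrightarrow>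
       (\<forall>\<theta>\<in>\<Omega>. snd \<theta> \<ge> fst \<theta> \<longrightarrow>
          d \<noteq> 0 \<and> F_semi_pi2 g C pa pb pa' pb' \<theta> \<noteq> 0 \<and>
          cosine d (F_semi_pi2 g C pa pb pa' pb' \<theta>) = -1) \<and>
       (\<forall>\<theta>\<in>\<Omega>. snd \<theta> \<le> fst \<theta> \<longrightarrow>
          d \<noteq> 0 \<and> F_semi_pi1 g C pa pb pa' pb' \<theta> \<noteq> 0 \<and>
          cosine d (F_semi_pi1 g C pa pb pa' pb' \<theta>) = -1))"
proof -
  let ?t1 = "theta_pi1 g C pa pb pa' pb'" and ?t2 = "theta_pi2 g C pa pb pa' pb'"
  have ab: "pa' \<noteq> pb'" using assms(11) \<open>pa = pb\<close> by (auto simp: mult_less_0_iff)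
  have dz: "d \<noteq> 0" unfolding d_def using dnz[of pa g pa' pb' C] assms ab by simp
  have F2: "F_semi_pi2 g C pa pb pa' pb' \<theta> = (l * (- pa * (pb - g*pb'))) *\<^sub>R d \<and>
            F_semi_pi1 g C pa pb pa' pb' \<theta> = ((1 - l) * (pa * (pa - g*pa'))) *\<^sub>R d"
    if "\<theta> = l *\<^sub>R ?t1 + (1 - l) *\<^sub>R ?t2" for \<theta> l
    using that Fform[of pa g pa' pb' C l] assms unfolding d_def by simp
  have mem: "\<exists>l. 0 < l \<and> l < 1 \<and> \<theta> = l *\<^sub>R ?t1 + (1 - l) *\<^sub>R ?t2" if "\<theta> \<in> \<Omega>" for \<theta>
    using that unfolding \<Omega>_def by blast
  show ?thesis
  proof (rule conjI; rule impI; rule conjI; rule ballI; rule impI)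
    fix \<theta> assume c: "pa - g * pa' > 0 \<and> pb - g * pb' < 0" and t: "\<theta> \<in> \<Omega>"
    obtain l where l: "0 < l" "l < 1" "\<theta> = l *\<^sub>R ?t1 + (1 - l) *\<^sub>R ?t2" using mem[OF t] by blast
    have c1: "l * (- pa * (pb - g*pb')) > 0" using l c assms by (simp add: mult_pos_neg)
    have c2: "(1 - l) * (pa * (pa - g*pa')) > 0" using l c assms by simp
    show "d \<noteq> 0 \<and> F_semi_pi2 g C pa pb pa' pb' \<theta> \<noteq> 0 \<and> cosine d (F_semi_pi2 g C pa pb pa' pb' \<theta>) = 1"
      using F2[OF l(3)] c1 dz cos_pos cos_neg by blast
  next
    fix \<theta> assume c: "pa - g * pa' > 0 \<and> pb - g * pb' < 0" and t: "\<theta> \<in> \<Omega>"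
    obtain l where l: "0 < l" "l < 1" "\<theta> = l *\<^sub>R ?t1 + (1 - l) *\<^sub>R ?t2" using mem[OF t] by blast
    have c2: "(1 - l) * (pa * (pa - g*pa')) > 0" using l c assms by simp
    show "d \<noteq> 0 \<and> F_semi_pi1 g C pa pb pa' pb' \<theta> \<noteq> 0 \<and> cosine d (F_semi_pi1 g C pa pb pa' pb' \<theta>) = 1"
      using F2[OF l(3)] c2 dz cos_pos cos_neg by blast
  next
    fix \<theta> assume c: "pa - g * pa' < 0 \<and> pb - g * pb' > 0" and t: "\<theta> \<in> \<Omega>"
    obtain l where l: "0 < l" "l < 1" "\<theta> = l *\<^sub>R ?t1 + (1 - l) *\<^sub>R ?t2" using mem[OF t] by blast
    have c1: "l * (- pa * (pb - g*pb')) < 0" using l c assms by (simp add: mult_pos_neg)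
    show "d \<noteq> 0 \<and> F_semi_pi2 g C pa pb pa' pb' \<theta> \<noteq> 0 \<and> cosine d (F_semi_pi2 g C pa pb pa' pb' \<theta>) = -1"
      using F2[OF l(3)] c1 dz cos_pos cos_neg by blast
  next
    fix \<theta> assume c: "pa - g * pa' < 0 \<and> pb - g * pb' > 0" and t: "\<theta> \<in> \<Omega>"
    obtain l where l: "0 < l" "l < 1" "\<theta> = l *\<^sub>R ?t1 + (1 - l) *\<^sub>R ?t2" using mem[OF t] by blast
    have c2: "(1 - l) * (pa * (pa - g*pa')) < 0" using l c assms by (simp add: mult_pos_neg)
    show "d \<noteq> 0 \<and> F_semi_pi1 g C pa pb pa' pb' \<theta> \<noteq> 0 \<and> cosine d (F_semi_pi1 g C pa pb pa' pb' \<theta>) = -1"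
      using F2[OF l(3)] c2 dz cos_pos cos_neg by blast
  qed
qed

end
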